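(* Let $\Omega_n=\dfrac{\pi^{n/2}}{\Gamma\left(\frac n2+1\right)}$ for $n\in\mathbb{N}_0$, and \[ a(n)=\frac12\ln\frac{n}{2\pi}+\frac1{4n}-\frac1{24n^3}+\frac1{20n^5}-\frac{17}{112n^7},\qquad b(n)=a(n)+\frac{31}{36n^9}. \] Then for every $n\in\mathbb{N}$, \[ a(n)<\ln\frac{\Omega_{n-1}}{\Omega_n}<b(n). \]
   Context: $\Omega_n$ is the volume of the unit ball in $\mathbb{R}^n$ ($\Omega_0=1$); $\Gamma$ is Euler's gamma function. *)

theory Defs
  imports "HOL-Analysis.Analysis"
begin

definition unit_ball_vol :: "nat \<Rightarrow> real" where
  "unit_ball_vol n = pi powr (real n / 2) / Gamma (real n / 2 + 1)"

definition a_lower :: "nat \<Rightarrow> real" where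
  "a_lower n = 1/2 * ln (real n / (2 * pi)) + 1 / (4 * real n) - 1 / (24 * real n ^ 3)
     + 1 / (20 * real n ^ 5) - 17 / (112 * real n ^ 7)"

definition b_upper :: "nat \<Rightarrow> real" where
  "b_upper n = a_lower n + 31 / (36 * real n ^ 9)"

end

theory Submission
  imports Defs
begin

lemma ln_low:
  fixes t :: real assumes "t \<ge> 0"
  shows "t - t^2/2 + t^3/3 - t^4/4 \<le> ln (1+t)"
proof -
  let ?f = "\<lambda>u::real. ln (1+u) - (u - u^2/2 + u^3/3 - u^4/4)"
  have "?f 0 \<le> ?f t"
  proof (rule DERIV_nonneg_imp_nondecreasing[OF assms])
    fix x :: real assume x: "0 \<le> x" "x \<le> t"
    have "DERIV ?f x :> (1/(1+x) - (1 - x + x^2 - x^3))"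
      by (rule derivative_eq_intros refl | use x in simp)+
    moreover have "1/(1+x) - (1 - x + x^2 - x^3) = x^4/(1+x)"
    proof -
      have h: "(1 - x + x^2 - x^3)*(1+x) = 1 - x^4" by algebra
      have "1/(1+x) - (1 - x + x^2 - x^3) = (1 - (1 - x + x^2 - x^3)*(1+x))/(1+x)"
        using x by (simp add: diff_divide_distrib)
      also have "\<dots> = x^4/(1+x)" by (simp only: h) simp
      finally show ?thesis .
    qed
    ultimately have "DERIV ?f x :> x^4/(1+x)" by simp
    moreover have "x^4/(1+x) \<ge> 0" using x by simp
    ultimately show "\<exists>y. DERIV ?f x :> y \<and> y \<ge> 0" by blast
  qed
  thus ?thesis by simp
qed

lemma ln_up:
  fixes t :: real assumes "t \<ge> 0"
  shows "ln (1+t) \<le> t - t^2/2 + t^3/3 - t^4/4 + t^5/5"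
proof -
  let ?f = "\<lambda>u::real. (u - u^2/2 + u^3/3 - u^4/4 + u^5/5) - ln (1+u)"
  have "?f 0 \<le> ?f t"
  proof (rule DERIV_nonneg_imp_nondecreasing[OF assms])
    fix x :: real assume x: "0 \<le> x" "x \<le> t"
    have "DERIV ?f x :> ((1 - x + x^2 - x^3 + x^4) - 1/(1+x))"
      by (rule derivative_eq_intros refl | use x in simp)+
    moreover have "(1 - x + x^2 - x^3 + x^4) - 1/(1+x) = x^5/(1+x)"
    proof -
      have h: "(1 - x + x^2 - x^3 + x^4)*(1+x) = 1 + x^5" by algebra
      have "(1 - x + x^2 - x^3 + x^4) - 1/(1+x) = ((1 - x + x^2 - x^3 + x^4)*(1+x) - 1)/(1+x)"
        using x by (simp add: diff_divide_distrib)
      also have "\<dots> = x^5/(1+x)" by (simp only: h) simp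
      finally show ?thesis .
    qed
    ultimately have "DERIV ?f x :> x^5/(1+x)" by simp
    moreover have "x^5/(1+x) \<ge> 0" using x by simp
    ultimately show "\<exists>y. DERIV ?f x :> y \<and> y \<ge> 0" by blast
  qed
  thus ?thesis by simp
qed

definition pp :: "real \<Rightarrow> real" where
  "pp x = 1 / (4 * x) - 1 / (24 * x ^ 3) + 1 / (20 * x ^ 5) - 17 / (112 * x ^ 7)"
definition BB :: "real \<Rightarrow> real" where "BB x = 31 / (36 * x ^ 9)"


lemma polyL0:
  fixes y z :: real assumes "y > 0" "z > 0" "y - z = 2*y*z"
  shows "(y*z - (y*z)^2/2 + (y*z)^3/3 - (y*z)^4/4)/2 - ((y/4 - y^3/24 + y^5/20 - 17*y^7/112) - (z/4 - z^3/24 + z^5/20 - 17*z^7/112))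
     = (136/7*y^7 + 68*y^6 + 478/5*y^5 + 308/5*y^4 + 77/5*y^3) * z^7"
  proof -
  have "((y*z - (y*z)^2/2 + (y*z)^3/3 - (y*z)^4/4)/2 - ((y/4 - y^3/24 + y^5/20 - 17*y^7/112) - (z/4 - z^3/24 + z^5/20 - 17*z^7/112))) - ((136/7*y^7 + 68*y^6 + 478/5*y^5 + 308/5*y^4 + 77/5*y^3) * z^7) = ((-1/4)*1 + (1/24)*z^2 + (-1/20)*z^4 + (17/112)*z^6 + (1/24)*y^1*z^1 + (-1/12)*y^1*z^2 + (-1/20)*y^1*z^3 + (1/10)*y^1*z^4 + (17/112)*y^1*z^5 + (-17/56)*y^1*z^6 + (1/24)*y^2 + (1/12)*y^2*z^1 + (7/60)*y^2*z^2 + (1/5)*y^2*z^3 + (-27/560)*y^2*z^4 + (-17/28)*y^2*z^5 + (17/28)*y^2*z^6 + (-1/20)*y^3*z^1 + (-1/5)*y^3*z^2 + (-251/560)*y^3*z^3 + (-143/280)*y^3*z^4 + (51/28)*y^3*z^5 + (993/70)*y^3*z^6 + (-1/20)*y^4 + (-1/10)*y^4*z^1 + (-27/560)*y^4*z^2 + (143/280)*y^4*z^3 + (199/70)*y^4*z^4 + (369/35)*y^4*z^5 + (1163/35)*y^4*z^6 + (17/112)*y^5*z^1 + (17/28)*y^5*z^2 + (51/28)*y^5*z^3 + (34/7)*y^5*z^4 + (85/7)*y^5*z^5 + (204/7)*y^5*z^6 + (17/112)*y^6 + (17/56)*y^6*z^1 + (17/28)*y^6*z^2 + (17/14)*y^6*z^3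 + (17/7)*y^6*z^4 + (34/7)*y^6*z^5 + (68/7)*y^6*z^6) * (y - z - 2*y*z)"
    by (simp add: field_simps) algebra
  also have "\<dots> = 0" using assms(3) by simp
  finally show ?thesis by simp
qed

lemma polyU0:
  fixes y z :: real assumes "y > 0" "z > 0" "y - z = 2*y*z"
  shows "((y/4 - y^3/24 + y^5/20 - 17*y^7/112) - (z/4 - z^3/24 + z^5/20 - 17*z^7/112)) + (31/36*y^9 - 31/36*z^9)
     - (y*z - (y*z)^2/2 + (y*z)^3/3 - (y*z)^4/4 + (y*z)^5/5)/2
     = (3968/9*y^9 + 1984*y^8 + 27232/7*y^7 + 89872/21*y^6 + 19576/7*y^5 + 1036*y^4 + 518/3*y^3) * z^9"
  proof -
  have "(((y/4 - y^3/24 + y^5/20 - 17*y^7/112) - (z/4 - z^3/24 + z^5/20 - 17*z^7/112)) + (31/36*y^9 - 31/36*z^9)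
     - (y*z - (y*z)^2/2 + (y*z)^3/3 - (y*z)^4/4 + (y*z)^5/5)/2) - ((3968/9*y^9 + 1984*y^8 + 27232/7*y^7 + 89872/21*y^6 + 19576/7*y^5 + 1036*y^4 + 518/3*y^3) * z^9) = ((1/4)*1 + (-1/24)*z^2 + (1/20)*z^4 + (-17/112)*z^6 + (31/36)*z^8 + (-1/24)*y^1*z^1 + (1/12)*y^1*z^2 + (1/20)*y^1*z^3 + (-1/10)*y^1*z^4 + (-17/112)*y^1*z^5 + (17/56)*y^1*z^6 + (31/36)*y^1*z^7 + (-31/18)*y^1*z^8 + (-1/24)*y^2 + (-1/12)*y^2*z^1 + (-7/60)*y^2*z^2 + (-1/5)*y^2*z^3 + (27/560)*y^2*z^4 + (17/28)*y^2*z^5 + (16/63)*y^2*z^6 + (-31/9)*y^2*z^7 + (31/9)*y^2*z^8 + (1/20)*y^3*z^1 + (1/5)*y^3*z^2 + (251/560)*y^3*z^3 + (143/280)*y^3*z^4 + (-121/126)*y^3*z^5 + (-83/21)*y^3*z^6 + (31/3)*y^3*z^7 + (1492/9)*y^3*z^8 + (1/20)*y^4 + (1/10)*y^4*z^1 + (27/560)*y^4*z^2 + (-143/280)*y^4*z^3 + (-2497/1260)*y^4*z^4 + (-128/63)*y^4*z^5 + (383/21)*y^4*z^6 + (1306/9)*y^4*z^7 + (6340/9)*y^4*z^8 + (-17/112)*y^5*z^1 + (-17/28)*y^5*z^2 + (-121/126)*y^5*z^3 + (128/63)*y^5*z^4 + (1405/63)*y^5*z^5 + (6844/63)*y^5*z^6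 + (3728/9)*y^5*z^7 + (87424/63)*y^5*z^8 + (-17/112)*y^6 + (-17/56)*y^6*z^1 + (16/63)*y^6*z^2 + (83/21)*y^6*z^3 + (383/21)*y^6*z^4 + (4034/63)*y^6*z^5 + (4136/21)*y^6*z^6 + (11744/21)*y^6*z^7 + (94768/63)*y^6*z^8 + (31/36)*y^7*z^1 + (31/9)*y^7*z^2 + (31/3)*y^7*z^3 + (248/9)*y^7*z^4 + (620/9)*y^7*z^5 + (496/3)*y^7*z^6 + (3472/9)*y^7*z^7 + (7936/9)*y^7*z^8 + (31/36)*y^8 + (31/18)*y^8*z^1 + (31/9)*y^8*z^2 + (62/9)*y^8*z^3 + (124/9)*y^8*z^4 + (248/9)*y^8*z^5 + (496/9)*y^8*z^6 + (992/9)*y^8*z^7 + (1984/9)*y^8*z^8) * (y - z - 2*y*z)"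
    by (simp add: field_simps) algebra
  also have "\<dots> = 0" using assms(3) by simp
  finally show ?thesis by simp
qed



lemma pp_yz: "x > 0 \<Longrightarrow> pp x = (1/x)/4 - (1/x)^3/24 + (1/x)^5/20 - 17*(1/x)^7/112"
  unfolding pp_def by (simp add: power_one_over)

lemma yz_rel: "x > 0 \<Longrightarrow> (1/x) - (1/(x+2)) = 2*(1/x)*(1/(x+2::real))"
  by (simp add: field_simps)

lemma polyL:
  fixes x :: real assumes x: "x > 0"
  shows "pp x - pp (x+2) < (1/(x*(x+2)) - (1/(x*(x+2)))^2/2 + (1/(x*(x+2)))^3/3 - (1/(x*(x+2)))^4/4)/2"
proof -
  define y where "y = 1/x"
  define z where "z = 1/(x+2)"
  have y: "y > 0" and z: "z > 0" using x by (auto simp: y_def z_def)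
  have t: "1/(x*(x+2)) = y*z" by (simp add: y_def z_def)
  have e1: "pp x = y/4 - y^3/24 + y^5/20 - 17*y^7/112" using pp_yz[OF x] by (simp add: y_def)
  have e2: "pp (x+2) = z/4 - z^3/24 + z^5/20 - 17*z^7/112" using pp_yz[of "x+2"] x by (simp add: z_def)
  have r: "y - z = 2*y*z" using yz_rel[OF x] by (simp add: y_def z_def)
  have "0 < (136/7*y^7 + 68*y^6 + 478/5*y^5 + 308/5*y^4 + 77/5*y^3) * z^7"
    using y z by (intro mult_pos_pos add_pos_pos) auto
  with polyL0[OF y z r] show ?thesis unfolding t e1 e2 by linarith
qed

lemma polyU:
  fixes x :: real assumes x: "x > 0"
  shows "(1/(x*(x+2)) - (1/(x*(x+2)))^2/2 + (1/(x*(x+2)))^3/3 - (1/(x*(x+2)))^4/4 + (1/(x*(x+2)))^5/5)/2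
     < (pp x - pp (x+2)) + (BB x - BB (x+2))"
proof -
  define y where "y = 1/x"
  define z where "z = 1/(x+2)"
  have y: "y > 0" and z: "z > 0" using x by (auto simp: y_def z_def)
  have t: "1/(x*(x+2)) = y*z" by (simp add: y_def z_def)
  have e1: "pp x = y/4 - y^3/24 + y^5/20 - 17*y^7/112" using pp_yz[OF x] by (simp add: y_def)
  have e2: "pp (x+2) = z/4 - z^3/24 + z^5/20 - 17*z^7/112" using pp_yz[of "x+2"] x by (simp add: z_def)
  have b1: "BB x = 31/36*y^9" by (simp add: BB_def y_def power_one_over)
  have b2: "BB (x+2) = 31/36*z^9" by (simp add: BB_def z_def power_one_over)
  have r: "y - z = 2*y*z" using yz_rel[OF x] by (simp add: y_def z_def)
  have "0 < (3968/9*y^9 + 1984*y^8 + 27232/7*y^7 + 89872/21*y^6 + 19576/7*y^5 + 1036*y^4 + 518/3*y^3) * z^9"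
    using y z by (intro mult_pos_pos add_pos_pos) auto
  with polyU0[OF y z r] show ?thesis unfolding t e1 e2 b1 b2 by linarith
qed

lemma ln_one_plus_t:
  fixes m :: real assumes m: "m > 0"
  shows "ln (1 + 1/(m*(m+2))) = 2*ln (m+1) - ln m - ln (m+2)"
proof -
  have "m*m + m*2 > 0" using m by (intro add_pos_pos) auto
  hence nz: "m*m + m*2 \<noteq> 0" by simp
  have "1 + 1/(m*(m+2)) = (m+1)^2/(m*(m+2))" using m nz by (simp add: field_simps power2_eq_square)
  thus ?thesis using m by (simp add: ln_div ln_mult ln_realpow)
qed

lemma pos_of_dec:
  fixes f :: "nat \<Rightarrow> real" and C :: real
  assumes lb: "\<And>m. m \<ge> 2 \<Longrightarrow> f m \<ge> - C / real m"
      and dec: "\<And>m. m \<ge> 1 \<Longrightarrow> f (m+2) < f m"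
      and m: "m \<ge> 1"
  shows "f m > 0"
proof -
  have nn: "f m \<ge> 0" if m: "m \<ge> 1" for m
  proof (rule ccontr)
    assume "\<not> f m \<ge> 0"
    hence neg: "- f m > 0" by simp
    have mono: "f (m + 2*k) \<le> f m" for k
    proof (induction k)
      case 0 thus ?case by simp
    next
      case (Suc k)
      have "f (m + 2*k + 2) < f (m + 2*k)" using dec[of "m+2*k"] m by simp
      thus ?case using Suc by simp
    qed
    obtain k :: nat where k: "C / (- f m) < real k" using reals_Archimedean2 by blast
    define N where "N = m + 2*(k+1)"
    have N2: "N \<ge> 2" and Nk: "real N > real k" unfolding N_def by auto
    have "C < real N * (- f m)"
    proof -
      have "C / (- f m) < real N" using k Nk by linarith
      thus ?thesis by (subst (asm) pos_divide_less_eq[OF neg])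
    qed
    hence "C / real N < - f m" using N2 by (simp add: divide_less_eq mult.commute)
    hence "f N > f m" using lb[OF N2] by linarith
    moreover have "f N \<le> f m" using mono[of "k+1"] by (simp add: N_def)
    ultimately show False by simp
  qed
  have "f (m+2) \<ge> 0" using nn m by simp
  thus ?thesis using dec[OF m] by linarith
qed

lemma uv_pos: "unit_ball_vol n > 0"
  unfolding unit_ball_vol_def by (intro divide_pos_pos) auto

lemma ln_uv: "ln (unit_ball_vol n) = real n / 2 * ln pi - ln (Gamma (real n / 2 + 1))"
proof -
  define A where "A = pi powr (real n / 2)"
  define B where "B = Gamma (real n / 2 + 1)"
  have "B > 0" unfolding B_def by (intro Gamma_real_pos) auto
  moreover have "A > 0" unfolding A_def by simp
  ultimately have "ln (A / B) = ln A - ln B" by (simp add: ln_div)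
  thus ?thesis unfolding unit_ball_vol_def A_def B_def by simp
qed

lemma g_eq:
  assumes "n \<ge> 1"
  shows "ln (unit_ball_vol (n - 1) / unit_ball_vol n) =
     ln (Gamma (real n/2 + 1)) - ln (Gamma (real n/2 + 1/2)) - ln pi / 2"
proof -
  have "ln (unit_ball_vol (n - 1) / unit_ball_vol n) = ln (unit_ball_vol (n - 1)) - ln (unit_ball_vol n)"
    using uv_pos[of n] uv_pos[of "n-1"] by (simp add: ln_div)
  also have "\<dots> = ln (Gamma (real n/2 + 1)) - ln (Gamma (real n/2 + 1/2)) - ln pi / 2"
    unfolding ln_uv using assms by (simp add: of_nat_diff field_simps)
  finally show ?thesis .
qed

lemma Gamma_step: "x > 0 \<Longrightarrow> ln (Gamma (x + 1)) = ln x + ln (Gamma (x::real))"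
proof -
  assume x: "x > 0"
  have "x \<notin> \<int>\<^sub>\<le>\<^sub>0" using x by (auto elim!: nonpos_Ints_cases)
  hence "Gamma (x+1) = x * Gamma x" by (rule Gamma_plus1)
  moreover have gx: "Gamma x \<noteq> 0" using Gamma_real_pos[OF x] by linarith
  ultimately show ?thesis using x by (simp add: ln_mult)
qed

lemma g_rec:
  assumes "n \<ge> 1"
  shows "ln (unit_ball_vol (n - 1) / unit_ball_vol n) + ln (unit_ball_vol (Suc n - 1) / unit_ball_vol (Suc n))
     = ln (real n + 1) - ln 2 - ln pi"
proof -
  have "ln (Gamma (real n/2 + 3/2)) = ln (real n/2 + 1/2) + ln (Gamma (real n/2 + 1/2))"
    using Gamma_step[of "real n/2 + 1/2"] by (simp add: add.assoc)
  moreover have "ln (real n/2 + 1/2) = ln (real n + 1) - ln 2"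
  proof -
    have e: "real n/2 + 1/2 = (real n + 1)/2" by simp
    have "ln ((real n + 1)/2) = ln (real n + 1) - ln 2" by (simp add: ln_div)
    thus ?thesis by (simp only: e)
  qed
  ultimately show ?thesis using g_eq[OF assms] g_eq[of "Suc n"]
    by (simp add: field_simps)
qed

lemma g_mono:
  assumes "n \<ge> 1"
  shows "ln (unit_ball_vol (n - 1) / unit_ball_vol n) \<le> ln (unit_ball_vol (Suc n - 1) / unit_ball_vol (Suc n))"
proof -
  have "(ln \<circ> Gamma) ((1 - 1/2) *\<^sub>R (real n/2 + 1/2) + (1/2) *\<^sub>R (real n/2 + 3/2))
     \<le> (1 - 1/2) * (ln \<circ> Gamma) (real n/2 + 1/2) + (1/2) * (ln \<circ> Gamma) (real n/2 + 3/2)"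
    by (rule convex_onD[OF log_convex_Gamma_real]) auto
  moreover have "(1 - 1/2) *\<^sub>R (real n/2 + 1/2) + (1/2) *\<^sub>R (real n/2 + 3/2) = real n/2 + (1::real)"
    by (simp add: field_simps)
  ultimately have "ln (Gamma (real n/2 + 1)) \<le> ln (Gamma (real n/2 + 1/2))/2 + ln (Gamma (real n/2 + 3/2))/2"
    by simp
  moreover have e1: "real (Suc n)/2 + 1 = real n/2 + 3/2" and e2: "real (Suc n)/2 + 1/2 = real n/2 + 1"
    by (simp_all add: field_simps)
  moreover note g_eq[OF assms]
  moreover note g_eq[of "Suc n", unfolded e1 e2]
  ultimately show ?thesis by simp
qed


lemma inv_pow_le:
  fixes x k c :: real assumes "x \<ge> 1" "k > 0" "j \<ge> 1" "c \<ge> 0"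
  shows "c/(k*x^j) \<le> c/(k*x)"
proof -
  have "x^1 \<le> x^j" by (rule power_increasing) (use assms in auto)
  hence "k*x \<le> k*x^j" using assms by simp
  moreover have "k*x > 0" using assms by simp
  moreover have "k*x^j > 0" using assms by simp
  ultimately show ?thesis using assms(4) by (intro divide_left_mono) auto
qed

lemma pp_bounds:
  fixes x :: real assumes x: "x \<ge> 1"
  shows "pp x \<le> 1/x" "- 1/x \<le> pp x"
proof -
  have a: "1/(20*x^5) \<le> 1/(20*x)" by (rule inv_pow_le) (use x in auto)
  have b: "1/(24*x^3) \<le> 1/(24*x)" by (rule inv_pow_le) (use x in auto)
  have c: "17/(112*x^7) \<le> 17/(112*x)" by (rule inv_pow_le) (use x in auto)
  have p: "0 \<le> 1/(24*x^3)" "0 \<le> 17/(112*x^7)" "0 \<le> 1/(20*x^5)" using x by auto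
  have e1: "1/(4*x) + 1/(20*x) \<le> 1/x" using x by (simp add: field_simps)
  have e2: "1/(24*x) + 17/(112*x) \<le> 1/x" using x by (simp add: field_simps)
  show "pp x \<le> 1/x" unfolding pp_def using a p e1 by linarith
  have "0 \<le> 1/(4*x)" using x by simp
  thus "- 1/x \<le> pp x" unfolding pp_def using b c p e2 by linarith
qed

lemma a_eq: "n \<ge> 1 \<Longrightarrow> a_lower n = ln (real n)/2 - ln 2/2 - ln pi/2 + pp (real n)"
proof -
  assume n: "n \<ge> 1"
  have "ln (real n / (2*pi)) = ln (real n) - ln 2 - ln pi" using n by (simp add: ln_div ln_mult)
  thus ?thesis unfolding a_lower_def pp_def by linarith
qed

theorem theorem7:
  fixes n :: nat
  assumes "n \<ge> 1"
  shows "a_lower n < ln (unit_ball_vol (n - 1) / unit_ball_vol n)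
       \<and> ln (unit_ball_vol (n - 1) / unit_ball_vol n) < b_upper n"
proof -
  define g where "g m = ln (unit_ball_vol (m - 1) / unit_ball_vol m)" for m
  define d where "d m = g m - a_lower m" for m
  define c where "c m = BB (real m) - d m" for m
  have rec: "g m + g (m+1) = ln (real m + 1) - ln 2 - ln pi" if "m \<ge> 1" for m
    using g_rec[OF that] unfolding g_def by simp
  have mono: "g m \<le> g (m+1)" if "m \<ge> 1" for m
    using g_mono[OF that] unfolding g_def by simp
  have glow: "g m \<ge> ln (real m)/2 - ln 2/2 - ln pi/2" if m: "m \<ge> 2" for m
  proof -
    have "g (m-1) + g m = ln (real m) - ln 2 - ln pi"
      using rec[of "m-1"] m by (simp add: of_nat_diff)
    moreover have "g (m-1) \<le> g m" using mono[of "m-1"] m by simp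
    ultimately show ?thesis by linarith
  qed
  have gup: "g m \<le> ln (real m + 1)/2 - ln 2/2 - ln pi/2" if m: "m \<ge> 1" for m
    using rec[OF m] mono[OF m] by linarith
  have ddiff: "d m - d (m+2) = ln (1 + 1/(real m*(real m+2)))/2 - (pp (real m) - pp (real m + 2))"
    if m: "m \<ge> 1" for m
  proof -
    have r1: "g m + g (m+1) = ln (real m + 1) - ln 2 - ln pi" using rec m by simp
    have r2: "g (m+1) + g (m+2) = ln (real m + 2) - ln 2 - ln pi"
      using rec[of "m+1"] m by (simp add: add.assoc)
    have a1: "a_lower m = ln (real m)/2 - ln 2/2 - ln pi/2 + pp (real m)" using a_eq m by simp
    have a2: "a_lower (m+2) = ln (real m + 2)/2 - ln 2/2 - ln pi/2 + pp (real m + 2)"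
      using a_eq[of "m+2"] by (simp add: add.commute)
    have l: "ln (1 + 1/(real m*(real m+2))) = 2*ln (real m+1) - ln (real m) - ln (real m+2)"
      using ln_one_plus_t[of "real m"] m by simp
    show ?thesis unfolding d_def using r1 r2 a1 a2 l by linarith
  qed
  define t where "t m = 1/(real m*(real m+2))" for m
  have tpos: "t m \<ge> 0" for m unfolding t_def by simp
  have ddec: "d (m+2) < d m" if m: "m \<ge> 1" for m
  proof -
    have "real m > 0" using m by simp
    from polyL[OF this] have "pp (real m) - pp (real m + 2) <
        (t m - (t m)^2/2 + (t m)^3/3 - (t m)^4/4)/2" unfolding t_def .
    moreover have "t m - (t m)^2/2 + (t m)^3/3 - (t m)^4/4 \<le> ln (1 + t m)" by (rule ln_low[OF tpos])
    hence "(t m - (t m)^2/2 + (t m)^3/3 - (t m)^4/4)/2 \<le> ln (1 + t m)/2" by simp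
    moreover have "d m - d (m+2) = ln (1 + t m)/2 - (pp (real m) - pp (real m + 2))"
      using ddiff[OF m] unfolding t_def .
    ultimately show ?thesis by linarith
  qed
  have cdec: "c (m+2) < c m" if m: "m \<ge> 1" for m
  proof -
    have "real m > 0" using m by simp
    from polyU[OF this] have "(t m - (t m)^2/2 + (t m)^3/3 - (t m)^4/4 + (t m)^5/5)/2
        < (pp (real m) - pp (real m + 2)) + (BB (real m) - BB (real m + 2))" unfolding t_def .
    moreover have "ln (1 + t m) \<le> t m - (t m)^2/2 + (t m)^3/3 - (t m)^4/4 + (t m)^5/5" by (rule ln_up[OF tpos])
    hence "ln (1 + t m)/2 \<le> (t m - (t m)^2/2 + (t m)^3/3 - (t m)^4/4 + (t m)^5/5)/2" by simp
    moreover have "BB (real (m+2)) = BB (real m + 2)" by (simp add: add.commute)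
    moreover have "d m - d (m+2) = ln (1 + t m)/2 - (pp (real m) - pp (real m + 2))"
      using ddiff[OF m] unfolding t_def .
    ultimately show ?thesis unfolding c_def by linarith
  qed
  have dlb: "d m \<ge> - 1 / real m" if m: "m \<ge> 2" for m
  proof -
    have "pp (real m) \<le> 1 / real m" using pp_bounds(1)[of "real m"] m by simp
    moreover have "a_lower m = ln (real m)/2 - ln 2/2 - ln pi/2 + pp (real m)" using a_eq m by simp
    ultimately show ?thesis unfolding d_def using glow[OF m] by linarith
  qed
  have clb: "c m \<ge> - 2 / real m" if m: "m \<ge> 2" for m
  proof -
    have m1: "m \<ge> 1" and mp: "real m > 0" using m by auto
    have "- 1 / real m \<le> pp (real m)" using pp_bounds(2)[of "real m"] m by simp
    moreover have "a_lower m = ln (real m)/2 - ln 2/2 - ln pi/2 + pp (real m)" using a_eq m by simp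
    moreover have "ln (real m + 1) - ln (real m) \<le> 1 / real m"
    proof -
      have "real m + 1 = real m * (1 + 1/real m)" using mp by (simp add: field_simps)
      moreover have pos: "1 + 1/real m > 0" using mp by (simp add: add_pos_nonneg)
      ultimately have "ln (real m + 1) = ln (real m) + ln (1 + 1/real m)" using mp
        by (simp only: ln_mult_pos)
      moreover have "ln (1 + 1/real m) \<le> 1/real m" by (rule ln_add_one_self_le_self) simp
      ultimately show ?thesis by linarith
    qed
    moreover have "BB (real m) \<ge> 0" unfolding BB_def by simp
    moreover have "- 2/real m = - 2 * (1/real m)" "- 1/real m = - (1/real m)" "1/real m \<ge> 0" by simp_all
    ultimately show ?thesis unfolding c_def d_def using gup[OF m1] by linarith
  qed
  have d0: "d n > 0" by (rule pos_of_dec[where f=d and C=1, OF dlb ddec assms])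
  have c0: "c n > 0" by (rule pos_of_dec[where f=c and C=2, OF clb cdec assms])
  have bu: "b_upper n = a_lower n + BB (real n)" unfolding b_upper_def BB_def by simp
  have ge: "g n = ln (unit_ball_vol (n - 1) / unit_ball_vol n)" by (simp add: g_def)
  show ?thesis using d0 c0 bu ge unfolding c_def d_def by linarith
qed

end
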